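(* Let $G$ be a discrete group, let $X$ and $Y$ be minimal $G$-flows with $Y$ essentially free, and let $\pi\colon X\to Y$ be a continuous surjective $G$-equivariant map. If $Y$ has the separated covering property, then so does $X$.
   Context: A $G$-flow is a compact Hausdorff space with an action of $G$ by homeomorphisms; it is minimal if every orbit is dense, and essentially free if for every $g\in G\setminus\{e\}$ the set $\{x: g\cdot x=x\}$ has empty interior. For finite $D\subseteq G$, a set $S\subseteq G$ is $D$-separated if $Dg\cap Dh=\emptyset$ for all distinct $g,h\in S$. A minimal $G$-flow $X$ has the separated covering property if for every finite $D\subseteq G$ and every non-empty open $U\subseteq X$ there exists a $D$-separated $S\subseteq G$ with $S^{-1}U=X$. *)

theory Defs
  imports "HOL-Analysis.Analysis"
begin

text \<open>A (discrete) group G is modelled as a type of class group_add (group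
operation written +, identity 0, inverse uminus; commutativity is NOT assumed).\<close>

definition G_flow :: "('g::group_add \<Rightarrow> 'a \<Rightarrow> 'a) \<Rightarrow> 'a topology \<Rightarrow> bool" where
  "G_flow act X \<longleftrightarrow> compact_space X \<and> Hausdorff_space X
     \<and> (\<forall>g. homeomorphic_map X X (act g))
     \<and> (\<forall>x\<in>topspace X. act 0 x = x)
     \<and> (\<forall>g h. \<forall>x\<in>topspace X. act (g + h) x = act g (act h x))"

definition minimal_flow :: "('g::group_add \<Rightarrow> 'a \<Rightarrow> 'a) \<Rightarrow> 'a topology \<Rightarrow> bool" where
  "minimal_flow act X \<longleftrightarrow> G_flow act X
     \<and> (\<forall>x\<in>topspace X. X closure_of (range (\<lambda>g. act g x)) = topspace X)"

definition essentially_free :: "('g::group_add \<Rightarrow> 'a \<Rightarrow> 'a) \<Rightarrow> 'a topology \<Rightarrow> bool" where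
  "essentially_free act X \<longleftrightarrow>
     (\<forall>g. g \<noteq> 0 \<longrightarrow> X interior_of {x \<in> topspace X. act g x = x} = {})"

definition separated :: "'g::group_add set \<Rightarrow> 'g set \<Rightarrow> bool" where
  "separated D S \<longleftrightarrow>
     (\<forall>g\<in>S. \<forall>h\<in>S. g \<noteq> h \<longrightarrow> ((\<lambda>d. d + g) ` D) \<inter> ((\<lambda>d. d + h) ` D) = {})"

definition separated_covering_property ::
    "('g::group_add \<Rightarrow> 'a \<Rightarrow> 'a) \<Rightarrow> 'a topology \<Rightarrow> bool" where
  "separated_covering_property act X \<longleftrightarrow>
     (\<forall>D U. finite D \<and> openin X U \<and> U \<noteq> {} \<longrightarrow>
        (\<exists>S. separated D S \<and> {act (- s) x | s x. s \<in> S \<and> x \<in> U} = topspace X))"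

end

theory Submission imports Defs begin

lemma gf_cont: "G_flow act X \<Longrightarrow> continuous_map X X (act g)"
  unfolding G_flow_def by (blast intro: homeomorphic_imp_continuous_map)

lemma gf_top: "G_flow act X \<Longrightarrow> x \<in> topspace X \<Longrightarrow> act g x \<in> topspace X"
  using gf_cont[of act X g] by (auto simp add: continuous_map_def)

lemma gf_add: "G_flow act X \<Longrightarrow> x \<in> topspace X \<Longrightarrow> act (g + h) x = act g (act h x)"
  unfolding G_flow_def by blast

lemma gf_inv1: "G_flow act X \<Longrightarrow> x \<in> topspace X \<Longrightarrow> act (-g) (act g x) = x"
  by (metis G_flow_def gf_add left_minus)

lemma gf_inv2: "G_flow act X \<Longrightarrow> x \<in> topspace X \<Longrightarrow> act g (act (-g) x) = x"
  by (metis G_flow_def gf_add right_minus)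

lemma gf_open: "G_flow act X \<Longrightarrow> openin X U \<Longrightarrow> openin X (act g ` U)"
  unfolding G_flow_def by (meson homeomorphic_map_openness openin_subset)

lemma min_cover:
  assumes m: "minimal_flow act X" and U: "openin X U" "U \<noteq> {}"
  shows "\<exists>F. finite F \<and> topspace X \<subseteq> (\<Union>g\<in>F. act (-g) ` U)"
proof -
  have gf: "G_flow act X" using m minimal_flow_def by blast
  have cov: "topspace X \<subseteq> (\<Union>g. act (-g) ` U)"
  proof
    fix x assume x: "x \<in> topspace X"
    have "\<exists>g. act g x \<in> U"
    proof (rule ccontr)
      assume "\<nexists>g. act g x \<in> U"
      then have "range (\<lambda>g. act g x) \<subseteq> topspace X - U" using gf_top[OF gf x] by auto
      moreover have "closedin X (topspace X - U)" using U by blast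
      ultimately have "X closure_of range (\<lambda>g. act g x) \<subseteq> topspace X - U"
        by (rule closure_of_minimal)
      then have "topspace X \<subseteq> topspace X - U" using m x unfolding minimal_flow_def by simp
      then show False using U openin_subset by blast
    qed
    then obtain g where "act g x \<in> U" by blast
    then show "x \<in> (\<Union>g. act (-g) ` U)" using gf_inv1[OF gf x, of g] by (metis UN_iff UNIV_I image_eqI)
  qed
  have "\<exists>\<F>. finite \<F> \<and> \<F> \<subseteq> range (\<lambda>g. act (-g) ` U) \<and> topspace X \<subseteq> \<Union>\<F>"
    using gf cov gf_open[OF gf U(1)] unfolding G_flow_def compact_space_alt
    by (metis (no_types, lifting) G_flow_def gf gf_open imageE)
  then obtain \<F> where "finite \<F>" "\<F> \<subseteq> range (\<lambda>g. act (-g) ` U)" "topspace X \<subseteq> \<Union>\<F>" by blast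
  then obtain F where "finite F" "\<F> = (\<lambda>g. act (-g) ` U) ` F"
    by (meson finite_subset_image)
  then show ?thesis using \<open>topspace X \<subseteq> \<Union>\<F>\<close> by blast
qed

lemma interior_union_empty:
  assumes "finite C" "\<And>c. c \<in> C \<Longrightarrow> closedin X (A c)" "\<And>c. c \<in> C \<Longrightarrow> X interior_of (A c) = {}"
  shows "X interior_of (\<Union>c\<in>C. A c) = {}"
  using assms
proof (induction C rule: finite_induct)
  case empty
  then show ?case by simp
next
  case (insert c C)
  let ?W = "X interior_of (A c \<union> (\<Union>c\<in>C. A c))"
  have "?W - A c \<subseteq> X interior_of (\<Union>c\<in>C. A c)"
    apply (rule interior_of_maximal)
     apply (meson Diff_subset_conv interior_of_subset)
    using insert.prems by (metis insert_iff openin_diff openin_interior_of)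
  then have "?W \<subseteq> A c" using insert by auto
  then have "?W \<subseteq> X interior_of A c" by (simp add: interior_of_maximal)
  then show ?case using insert.prems by auto
qed


theorem proposition2p7:
  fixes actX :: "'g::group_add \<Rightarrow> 'a \<Rightarrow> 'a"
    and actY :: "'g \<Rightarrow> 'b \<Rightarrow> 'b"
    and X :: "'a topology" and Y :: "'b topology"
    and \<pi> :: "'a \<Rightarrow> 'b"
  assumes "minimal_flow actX X"
    and "minimal_flow actY Y"
    and "essentially_free actY Y"
    and "continuous_map X Y \<pi>"
    and "\<pi> ` topspace X = topspace Y"
    and "\<forall>g. \<forall>x\<in>topspace X. \<pi> (actX g x) = actY g (\<pi> x)"
    and "separated_covering_property actY Y"
  shows "separated_covering_property actX X"
proof -
  note mX = assms(1) and mY = assms(2) and ef = assms(3) and cpi = assms(4)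
    and surj = assms(5) and eqv = assms(6) and scpY = assms(7)
  have gX: "G_flow actX X" using mX minimal_flow_def by blast
  have gY: "G_flow actY Y" using mY minimal_flow_def by blast
  have HY: "Hausdorff_space Y" using gY G_flow_def by blast
  have piT: "\<And>x. x \<in> topspace X \<Longrightarrow> \<pi> x \<in> topspace Y" using surj by blast
  show ?thesis unfolding separated_covering_property_def
  proof (intro allI impI)
    fix D :: "'g set" and U :: "'a set" assume DU: "finite D \<and> openin X U \<and> U \<noteq> {}"
    then have fD: "finite D" and oU: "openin X U" and neU: "U \<noteq> {}" by auto
    have UX: "U \<subseteq> topspace X" using oU openin_subset by blast
    define B where "B = (\<lambda>(d,d'). -d' + d) ` (D \<times> D) - {0}"
    have fB: "finite B" unfolding B_def using fD by auto
    define Fix where "Fix b = {y \<in> topspace Y. actY b y = y}" for b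
    have clFix: "closedin Y (Fix b)" for b
      unfolding Fix_def
      by (rule closedin_continuous_maps_eq[OF HY gf_cont[OF gY]]) (simp add: continuous_map_id)
    have intFix: "b \<noteq> 0 \<Longrightarrow> Y interior_of (Fix b) = {}" for b
      using ef unfolding essentially_free_def Fix_def by blast
    have "\<exists>x0\<in>U. \<forall>b\<in>B. actY b (\<pi> x0) \<noteq> \<pi> x0"
    proof (rule ccontr)
      assume "\<not> ?thesis"
      then have fx: "\<forall>x\<in>U. \<exists>b\<in>B. actY b (\<pi> x) = \<pi> x" by blast
      obtain F0 where fF0: "finite F0" and cF0: "topspace X \<subseteq> (\<Union>g\<in>F0. actX (-g) ` U)"
        using min_cover[OF mX oU neU] by blast
      define C where "C = (\<lambda>(g,b). -g + b + g) ` (F0 \<times> B)"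
      have fC: "finite C" unfolding C_def using fF0 fB by auto
      have C0: "c \<in> C \<Longrightarrow> c \<noteq> 0" for c
      proof
        assume "c \<in> C" "c = 0"
        then obtain g b where "b \<in> B" "-g + b + g = 0" unfolding C_def by auto
        then have "b = 0" by (metis add.assoc add_minus_cancel add_right_cancel add_0_left neg_eq_iff_add_eq_0 add.right_neutral)
        then show False using \<open>b \<in> B\<close> B_def by auto
      qed
      have "topspace Y \<subseteq> (\<Union>c\<in>C. Fix c)"
      proof
        fix y assume "y \<in> topspace Y"
        then obtain x where x: "x \<in> topspace X" "y = \<pi> x" using surj by auto
        then obtain g u where g: "g \<in> F0" "u \<in> U" "x = actX (-g) u" using cF0 by blast
        obtain b where b: "b \<in> B" "actY b (\<pi> u) = \<pi> u" using fx g by blast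
        have uT: "\<pi> u \<in> topspace Y" using piT UX g by blast
        have "\<pi> (actX (-g) u) = actY (-g) (\<pi> u)" using eqv g(2) UX by blast
        then have yv: "y = actY (-g) (\<pi> u)" using x g by simp
        have yT: "y \<in> topspace Y" by fact
        have "actY (-g + b + g) y = actY (-g + b) (actY g y)" using gf_add[OF gY yT] .
        also have "\<dots> = actY (-g) (actY b (actY g y))" using gf_add[OF gY gf_top[OF gY yT]] .
        also have "actY g y = \<pi> u" using yv gf_inv2[OF gY uT] by simp
        also have "actY (-g) (actY b (\<pi> u)) = y" using yv b by simp
        finally have "y \<in> Fix (-g + b + g)" unfolding Fix_def using \<open>y \<in> topspace Y\<close> by simp
        moreover have "-g + b + g \<in> C" unfolding C_def using g b by force
        ultimately show "y \<in> (\<Union>c\<in>C. Fix c)" by blast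
      qed
      then have "Y interior_of topspace Y \<subseteq> Y interior_of (\<Union>c\<in>C. Fix c)"
        by (rule interior_of_mono)
      also have "\<dots> = {}"
        by (rule interior_union_empty[OF fC clFix]) (simp add: C0 intFix)
      finally have "topspace Y = {}" by simp
      then show False using neU UX piT by blast
    qed
    then obtain x0 where x0: "x0 \<in> U" "\<forall>b\<in>B. actY b (\<pi> x0) \<noteq> \<pi> x0" by blast
    define y0 where "y0 = \<pi> x0"
    have y0T: "y0 \<in> topspace Y" using x0 UX piT y0_def by blast
    have "\<forall>b\<in>B. \<exists>Nb. openin Y Nb \<and> y0 \<in> Nb \<and> (\<forall>y\<in>Nb. actY b y \<notin> Nb)"
    proof
      fix b assume b: "b \<in> B"
      have "actY b y0 \<in> topspace Y" using gf_top[OF gY y0T] .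
      moreover have "actY b y0 \<noteq> y0" using x0(2) b unfolding y0_def by blast
      ultimately obtain Oo Pp where OP: "openin Y Oo" "openin Y Pp" "y0 \<in> Oo" "actY b y0 \<in> Pp" "disjnt Oo Pp"
        using HY[unfolded Hausdorff_space_def, rule_format, of y0 "actY b y0"] y0T by auto
      define Nb where "Nb = Oo \<inter> {y \<in> topspace Y. actY b y \<in> Pp}"
      have "openin Y Nb" unfolding Nb_def
        using OP(1) openin_continuous_map_preimage[OF gf_cont[OF gY] OP(2)] by (rule openin_Int)
      moreover have "y0 \<in> Nb" unfolding Nb_def using OP(3,4) y0T by simp
      moreover have "\<forall>y\<in>Nb. actY b y \<notin> Nb" unfolding Nb_def using OP(5) by (auto simp: disjnt_iff)
      ultimately show "\<exists>Nb. openin Y Nb \<and> y0 \<in> Nb \<and> (\<forall>y\<in>Nb. actY b y \<notin> Nb)" by blast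
    qed
    then obtain Nf where Nf0: "\<forall>b\<in>B. openin Y (Nf b) \<and> y0 \<in> Nf b \<and> (\<forall>y\<in>Nf b. actY b y \<notin> Nf b)"
      by (rule bchoice[elim_format]) blast
    then have Nf: "\<And>b. b \<in> B \<Longrightarrow> openin Y (Nf b) \<and> y0 \<in> Nf b \<and> (\<forall>y\<in>Nf b. actY b y \<notin> Nf b)" by blast
    define N where "N = (\<Inter>b\<in>B. Nf b) \<inter> topspace Y"
    have oN: "openin Y N" unfolding N_def by (rule openin_INT[OF fB]) (use Nf in blast)
    have y0N: "y0 \<in> N" unfolding N_def using Nf y0T by blast
    have Nsep: "\<And>b y. b \<in> B \<Longrightarrow> y \<in> N \<Longrightarrow> actY b y \<notin> N" unfolding N_def using Nf by blast
    have "regular_space Y" by (rule compact_Hausdorff_imp_regular_space) (use gY in \<open>auto simp: G_flow_def\<close>)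
    then obtain V0 where V0: "openin Y V0" "y0 \<in> V0" "disjnt (topspace Y - N) (Y closure_of V0)"
    proof -
      have "closedin Y (topspace Y - N)" by (rule closedin_diff) (auto simp: oN)
      moreover have "y0 \<in> topspace Y - (topspace Y - N)" using y0N y0T by blast
      ultimately have "\<exists>U. openin Y U \<and> y0 \<in> U \<and> disjnt (topspace Y - N) (Y closure_of U)"
        using \<open>regular_space Y\<close> unfolding regular_space by blast
      then show ?thesis using that by blast
    qed
    define Cl where "Cl = Y closure_of V0"
    have "Cl \<subseteq> topspace Y" by (simp add: Cl_def closure_of_subset_topspace)
    then have ClN: "Cl \<subseteq> N" using V0(3) by (auto simp: disjnt_def Cl_def)
    have V0Cl: "V0 \<subseteq> Cl" unfolding Cl_def using V0(1) by (simp add: closure_of_subset openin_subset)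
    have clCl: "closedin Y Cl" unfolding Cl_def by simp
    define U' where "U' = U \<inter> {x \<in> topspace X. \<pi> x \<in> V0}"
    have oU': "openin X U'" unfolding U'_def
      by (rule openin_Int[OF oU openin_continuous_map_preimage[OF cpi V0(1)]])
    have neU': "U' \<noteq> {}" unfolding U'_def using x0(1) UX V0(2) unfolding y0_def by blast
    obtain F where fF: "finite F" and cF: "topspace X \<subseteq> (\<Union>g\<in>F. actX (-g) ` U')"
      using min_cover[OF mX oU' neU'] by blast
    define F1 where "F1 = {f \<in> F. actY f y0 \<in> Cl}"
    have fF1: "finite F1" unfolding F1_def using fF by simp
    define V where "V = (\<Inter>f\<in>F - F1. {y \<in> topspace Y. actY f y \<in> topspace Y - Cl}) \<inter> topspace Y"
    have oV: "openin Y V" unfolding V_def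
      apply (rule openin_INT) using fF apply simp
      using openin_continuous_map_preimage[OF gf_cont[OF gY] openin_diff[OF openin_topspace clCl]] by blast
    have y0V: "y0 \<in> V" unfolding V_def F1_def using y0T gf_top[OF gY y0T] by auto
    have Vout: "\<And>f v. f \<in> F \<Longrightarrow> v \<in> V \<Longrightarrow> actY f v \<in> Cl \<Longrightarrow> f \<in> F1"
      unfolding V_def by blast
    define D' where "D' = (\<lambda>(d,f). d + f) ` (D \<times> F1)"
    have fD': "finite D'" unfolding D'_def using fD fF1 by auto
    obtain S' where S'sep: "separated D' S'"
      and S'cov: "{actY (- s) y |s y. s \<in> S' \<and> y \<in> V} = topspace Y"
      using scpY[unfolded separated_covering_property_def, rule_format, of D' V] fD' oV y0V by blast
    define S where "S = (\<lambda>(f,s). f + s) ` (F1 \<times> S')"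
    show "\<exists>S. separated D S \<and> {actX (- s) x |s x. s \<in> S \<and> x \<in> U} = topspace X"
    proof (intro exI conjI)
      show "separated D S" unfolding separated_def
      proof (intro ballI impI)
        fix g h assume g: "g \<in> S" and h: "h \<in> S" and gh: "g \<noteq> h"
        obtain f s where fs: "f \<in> F1" "s \<in> S'" "g = f + s" using g S_def by auto
        obtain f' s' where fs': "f' \<in> F1" "s' \<in> S'" "h = f' + s'" using h S_def by auto
        show "(\<lambda>d. d + g) ` D \<inter> (\<lambda>d. d + h) ` D = {}"
        proof (rule ccontr)
          assume "(\<lambda>d. d + g) ` D \<inter> (\<lambda>d. d + h) ` D \<noteq> {}"
          then obtain d d' where dd: "d \<in> D" "d' \<in> D" "d + g = d' + h" by auto
          show False
          proof (cases "s = s'")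
            case True
            have "(d + f) + s = (d' + f') + s" using dd(3) fs(3) fs'(3) True by (simp add: add.assoc)
            then have e: "d + f = d' + f'" by simp
            have ff: "f \<noteq> f'" using gh fs fs' True by auto
            define b where "b = -d' + d"
            have "b + f = -d' + (d + f)" unfolding b_def by (simp add: add.assoc)
            also have "\<dots> = f'" using e by simp
            finally have fb: "f' = b + f" by simp
            have "b \<noteq> 0" using ff fb by auto
            then have bB: "b \<in> B" unfolding B_def using dd(1,2) by (auto simp: b_def intro!: image_eqI[where x="(d,d')"])
            have a1: "actY f y0 \<in> N" using fs(1) F1_def ClN by auto
            have a2: "actY f' y0 \<in> N" using fs'(1) F1_def ClN by auto
            have "actY f' y0 = actY b (actY f y0)" using fb gf_add[OF gY y0T] by simp
            then show False using Nsep[OF bB a1] a2 by simp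
          next
            case False
            have m1: "(d + f) + s \<in> (\<lambda>x. x + s) ` D'" unfolding D'_def using dd(1) fs(1) by (auto intro!: image_eqI[where x="(d,f)"])
            have m2: "(d' + f') + s' \<in> (\<lambda>x. x + s') ` D'" unfolding D'_def using dd(2) fs'(1) by (auto intro!: image_eqI[where x="(d',f')"])
            have "(d + f) + s = (d' + f') + s'" using dd(3) fs(3) fs'(3) by (simp add: add.assoc)
            moreover have "(\<lambda>x. x + s) ` D' \<inter> (\<lambda>x. x + s') ` D' = {}"
              using S'sep False fs(2) fs'(2) unfolding separated_def by blast
            ultimately show False using m1 m2 by auto
          qed
        qed
      qed
      show "{actX (- s) x |s x. s \<in> S \<and> x \<in> U} = topspace X"
      proof
        show "{actX (- s) x |s x. s \<in> S \<and> x \<in> U} \<subseteq> topspace X" using UX gf_top[OF gX] by auto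
        show "topspace X \<subseteq> {actX (- s) x |s x. s \<in> S \<and> x \<in> U}"
        proof
          fix x assume xT: "x \<in> topspace X"
          have "\<pi> x \<in> topspace Y" using piT xT .
          then have "\<pi> x \<in> {actY (- s) y |s y. s \<in> S' \<and> y \<in> V}" using S'cov by simp
          then obtain s v where sv: "s \<in> S'" "v \<in> V" "\<pi> x = actY (-s) v" by blast
          define z where "z = actX s x"
          have zT: "z \<in> topspace X" using gf_top[OF gX xT] z_def by simp
          have vT: "v \<in> topspace Y" using sv(2) V_def by auto
          have "\<pi> z = actY s (\<pi> x)" using eqv xT z_def by simp
          then have pz: "\<pi> z = v" using sv(3) gf_inv2[OF gY vT] by simp
          obtain f u where fu: "f \<in> F" "u \<in> U'" "z = actX (-f) u" using cF zT by blast
          have uT: "u \<in> topspace X" using fu(2) U'_def by auto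
          have "actX f z = u" using fu(3) gf_inv2[OF gX uT] by simp
          then have "\<pi> u = \<pi> (actX f z)" by simp
          also have "\<dots> = actY f (\<pi> z)" using eqv zT by blast
          finally have "\<pi> u = actY f v" using pz by simp
          moreover have "\<pi> u \<in> V0" using fu(2) U'_def by auto
          ultimately have "actY f v \<in> Cl" using V0Cl by auto
          then have fF1: "f \<in> F1" using Vout fu(1) sv(2) by blast
          have "actX (-(f+s)) u = actX (-s + -f) u" by (simp add: minus_add)
          also have "\<dots> = actX (-s) (actX (-f) u)" using gf_add[OF gX uT] .
          also have "\<dots> = actX (-s) z" using fu(3) by simp
          also have "\<dots> = x" unfolding z_def using gf_inv1[OF gX xT] by simp
          finally have "actX (-(f+s)) u = x" .
          moreover have "f + s \<in> S" unfolding S_def using fF1 sv(1) by force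
          moreover have "u \<in> U" using fu(2) U'_def by auto
          ultimately show "x \<in> {actX (- s) x |s x. s \<in> S \<and> x \<in> U}"
            by (intro CollectI exI[where x="f+s"] exI[where x=u]) simp
        qed
      qed
    qed
  qed
qed

end
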